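(* Let $k\ge1$ and $c\in\mathcal{S}_k^\beta$. Then $w_{Hom}(c)=q^{sk-1}$ if $\nu(c)=s-1$; $w_{Hom}(c)=q^{sk-k-1}(q^k-1)$ if $\nu(c)<s-1$; and $w_{Hom}(c)=0$ otherwise.
   Context: Let $R$ be a finite commutative chain ring with maximal ideal $\langle\gamma\rangle$, nilpotency index $s$ and residue field $R/\langle\gamma\rangle\cong\mathbb{F}_q$. Fix coset representatives $T=\{e_0,\dots,e_{q-1}\}$ with $e_0=0,e_1=1$, ordered $e_0<\dots<e_{q-1}$; each $r\in R$ is uniquely $\sum_{i=0}^{s-1}r_i\gamma^i$, $r_i\in T$; order $R$ by $x>y$ iff $x_i>y_i$ in $T$ for the largest $i$ with $x_i\neq y_i$; list $R=\{\rho_0,\dots,\rho_{q^s-1}\}$ increasingly. $\mathbf{a}^{(m)}$ is the constant vector of length $m$. Define $G_1^\alpha=(\rho_0\ \cdots\ \rho_{q^s-1})$ and, for $k>1$, $G_k^\alpha$ as the matrix of $q^s$ column blocks, the $j$-th having first row $\boldsymbol{\rho_j}^{(q^{s(k-1)})}$ and $G_{k-1}^\alpha$ below. List $\langle\gamma\rangle$ increasingly as $a_0\gamma<\dots<a_{q^{s-1}-1}\gamma$. Define $G_1^\beta=(1)$ and, for $k>1$, $G_k^\beta$ as the matrix with column blocks: first a block with first row $\mathbf{1}^{(q^{s(k-1)})}$ and $G_{k-1}^\alpha$ below; then for each $j=0,\dots,q^{s-1}-1$ a block with first row the constant vector with entry $a_j\gamma$ and $G_{k-1}^\beta$ below. $\mathcal{S}_k^\beta$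 is the $R$-submodule generated by the rows of $G_k^\beta$. Homogeneous weight: for $x\in R$, $w_{Hom}(x)=0$ if $x=0$; $(q-1)q^{s-2}$ if $x\neq0$, $x\notin\langle\gamma^{s-1}\rangle$; $q^{s-1}$ if $x\neq0$, $x\in\langle\gamma^{s-1}\rangle$; extended to vectors by summing over coordinates. Valuation: for $x\in R\setminus\{0\}$, $\nu(x)$ is the largest $m$ with $x=\gamma^m\beta$, $\beta$ a unit; $\nu(0)=\infty$; for $x\in R^n$, $\nu(x)=\min_i\nu(x_i)$. *)

theory Defs
  imports Main "HOL-Library.Extended_Nat"
begin

definition is_ideal :: "'a::comm_ring_1 set \<Rightarrow> bool" where
  "is_ideal I \<longleftrightarrow> 0 \<in> I \<and> (\<forall>x\<in>I. \<forall>y\<in>I. x + y \<in> I) \<and> (\<forall>r. \<forall>x\<in>I. r * x \<in> I)"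

definition principal_ideal :: "'a::comm_ring_1 \<Rightarrow> 'a set" where
  "principal_ideal g = {g * x | x. True}"

definition is_maximal_ideal :: "'a::comm_ring_1 set \<Rightarrow> bool" where
  "is_maximal_ideal I \<longleftrightarrow> is_ideal I \<and> I \<noteq> UNIV \<and>
     (\<forall>J. is_ideal J \<longrightarrow> I \<subseteq> J \<longrightarrow> J = I \<or> J = UNIV)"

definition chain_ring :: "'a::comm_ring_1 itself \<Rightarrow> bool" where
  "chain_ring _ \<longleftrightarrow> (0::'a) \<noteq> 1 \<and>
     (\<forall>I J :: 'a set. is_ideal I \<longrightarrow> is_ideal J \<longrightarrow> I \<subseteq> J \<or> J \<subseteq> I)"

definition nilpotency_index :: "'a::comm_ring_1 \<Rightarrow> nat \<Rightarrow> bool" where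
  "nilpotency_index g s \<longleftrightarrow> g ^ s = 0 \<and> (\<forall>m<s. g ^ m \<noteq> 0)"

text \<open>T = [e_0,...,e_{q-1}] is a list of coset representatives of R/<gamma>,
  e_0 = 0, e_1 = 1, the order on T being the list order.\<close>
definition coset_reps :: "'a::comm_ring_1 list \<Rightarrow> 'a \<Rightarrow> bool" where
  "coset_reps T g \<longleftrightarrow> length T \<ge> 2 \<and> T ! 0 = 0 \<and> T ! 1 = 1 \<and>
     (\<forall>x. \<exists>!i. i < length T \<and> x - T ! i \<in> principal_ideal g)"

text \<open>Since the order on R is lexicographic from the highest gamma-adic digit, this is the
  j-th element of R in increasing order (j < q^s).\<close>
definition rho :: "'a::comm_ring_1 list \<Rightarrow> 'a \<Rightarrow> nat \<Rightarrow> nat \<Rightarrow> 'a" where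
  "rho T g s j = (\<Sum>i<s. T ! ((j div length T ^ i) mod length T) * g ^ i)"

text \<open>The j-th element a_j gamma of <gamma> in increasing order (those with zero 0-th digit).\<close>
definition gel :: "'a::comm_ring_1 list \<Rightarrow> 'a \<Rightarrow> nat \<Rightarrow> nat \<Rightarrow> 'a" where
  "gel T g s j = rho T g s (j * length T)"

section \<open>Generator matrices, represented as lists of columns (top entry first)\<close>

fun alpha_cols :: "'a::comm_ring_1 list \<Rightarrow> 'a \<Rightarrow> nat \<Rightarrow> nat \<Rightarrow> 'a list list" where
  "alpha_cols T g s 0 = []"
| "alpha_cols T g s (Suc 0) = map (\<lambda>j. [rho T g s j]) [0..<length T ^ s]"
| "alpha_cols T g s (Suc (Suc k)) =
     concat (map (\<lambda>j. map (\<lambda>col. rho T g s j # col) (alpha_cols T g s (Suc k))) [0..<length T ^ s])"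

fun beta_cols :: "'a::comm_ring_1 list \<Rightarrow> 'a \<Rightarrow> nat \<Rightarrow> nat \<Rightarrow> 'a list list" where
  "beta_cols T g s 0 = []"
| "beta_cols T g s (Suc 0) = [[1]]"
| "beta_cols T g s (Suc (Suc k)) =
     map (\<lambda>col. 1 # col) (alpha_cols T g s (Suc k)) @
     concat (map (\<lambda>j. map (\<lambda>col. gel T g s j # col) (beta_cols T g s (Suc k))) [0..<length T ^ (s - 1)])"

definition S_beta :: "'a::comm_ring_1 list \<Rightarrow> 'a \<Rightarrow> nat \<Rightarrow> nat \<Rightarrow> 'a list set" where
  "S_beta T g s k = {map (\<lambda>col. \<Sum>i<k. x i * col ! i) (beta_cols T g s k) | x :: nat \<Rightarrow> 'a. True}"

definition hom_weight :: "nat \<Rightarrow> 'a::comm_ring_1 \<Rightarrow> nat \<Rightarrow> 'a \<Rightarrow> nat" where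
  "hom_weight q g s x =
     (if x = 0 then 0
      else if x \<notin> principal_ideal (g ^ (s - 1)) then (q - 1) * q ^ (s - 2)
      else q ^ (s - 1))"

definition hom_weight_vec :: "nat \<Rightarrow> 'a::comm_ring_1 \<Rightarrow> nat \<Rightarrow> 'a list \<Rightarrow> nat" where
  "hom_weight_vec q g s c = sum_list (map (hom_weight q g s) c)"

definition val :: "'a::comm_ring_1 \<Rightarrow> 'a \<Rightarrow> enat" where
  "val g x = (if x = 0 then \<infinity> else enat (GREATEST m. \<exists>b. b dvd 1 \<and> x = g ^ m * b))"

definition val_vec :: "'a::comm_ring_1 \<Rightarrow> 'a list \<Rightarrow> enat" where
  "val_vec g c = Min (set (map (val g) c))"

end

theory Submission imports Defs begin

lemma pi_mem: "x \<in> principal_ideal y \<longleftrightarrow> (\<exists>z. x = y * z)"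
  unfolding principal_ideal_def by auto

lemma pi_ideal: "is_ideal (principal_ideal y)"
  unfolding is_ideal_def
proof (intro conjI ballI allI)
  show "0 \<in> principal_ideal y" unfolding pi_mem by (rule exI[of _ 0]) simp
next
  fix a b assume "a \<in> principal_ideal y" "b \<in> principal_ideal y"
  then obtain z1 z2 where "a = y * z1" "b = y * z2" unfolding pi_mem by blast
  then have "a + b = y * (z1 + z2)" by (simp add: distrib_left)
  then show "a + b \<in> principal_ideal y" unfolding pi_mem by blast
next
  fix r a assume "a \<in> principal_ideal y"
  then obtain z1 where "a = y * z1" unfolding pi_mem by blast
  then have "r * a = y * (r * z1)" by (simp add: mult.left_commute)
  then show "r * a \<in> principal_ideal y" unfolding pi_mem by blast
qed

lemma arith_top:
  fixes q s k t W SL SM S0 S1 :: nat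
  assumes q2: "q \<ge> 2" and s1: "s \<ge> 1" and k1: "k \<ge> 1" and t: "t = s - 1"
    and A: "(q ^ s - q ^ (s - 1)) * W + SM = SL"
    and B: "q ^ s * SL = (q ^ s) ^ k * S0"
    and C: "q ^ (s - 1) * SM = (q ^ (s - 1)) ^ k * S1"
    and S0: "S0 = (q - 1) * q ^ (s - 2) * (q ^ (s - 0) - q ^ (s - max 0 (s - 1 - t))) +
       q ^ (s - 1) * (q ^ (s - max 0 (s - 1 - t)) - q ^ (s - max 0 (s - t)))"
    and S1: "S1 = (q - 1) * q ^ (s - 2) * (q ^ (s - 1) - q ^ (s - max 1 (s - 1 - t))) +
       q ^ (s - 1) * (q ^ (s - max 1 (s - 1 - t)) - q ^ (s - max 1 (s - t)))"
  shows "W = q ^ (s * k - 1)"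
proof -
  obtain s1 where s: "s = Suc s1" using s1 by (cases s) auto
  obtain k1 where k: "k = Suc k1" using k1 by (cases k) auto
  have qp: "q > 0" using q2 by simp
  have S1': "S1 = 0" unfolding S1 t s by simp
  then have SM: "SM = 0" using C qp by simp
  have S0': "S0 = q ^ s1 * (q ^ s - q ^ s1)" unfolding S0 t s by simp
  have "q ^ s * SL = q ^ s * ((q ^ s) ^ k1 * S0)" using B unfolding k by (simp add: mult.assoc)
  then have SL: "SL = (q ^ s) ^ k1 * S0" using qp by simp
  have "(q ^ s - q ^ s1) * W = (q ^ s - q ^ s1) * ((q ^ s) ^ k1 * q ^ s1)"
    using A SM SL S0' s by (simp add: mult.commute mult.left_commute)
  moreover have "q ^ s1 < q ^ s" using q2 s by simp
  ultimately have "W = (q ^ s) ^ k1 * q ^ s1" by simp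
  also have "\<dots> = q ^ (s * k1 + s1)" by (simp add: power_mult power_add)
  also have "s * k1 + s1 = s * k - 1" unfolding s k by simp
  finally show ?thesis .
qed

lemma arith_low:
  fixes q s k t W SL SM S0 S1 :: nat
  assumes q2: "q \<ge> 2" and k1: "k \<ge> 1" and t: "t < s - 1"
    and A: "(q ^ s - q ^ (s - 1)) * W + SM = SL"
    and B: "q ^ s * SL = (q ^ s) ^ k * S0"
    and C: "q ^ (s - 1) * SM = (q ^ (s - 1)) ^ k * S1"
    and S0: "S0 = (q - 1) * q ^ (s - 2) * (q ^ (s - 0) - q ^ (s - max 0 (s - 1 - t))) +
       q ^ (s - 1) * (q ^ (s - max 0 (s - 1 - t)) - q ^ (s - max 0 (s - t)))"
    and S1: "S1 = (q - 1) * q ^ (s - 2) * (q ^ (s - 1) - q ^ (s - max 1 (s - 1 - t))) +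
       q ^ (s - 1) * (q ^ (s - max 1 (s - 1 - t)) - q ^ (s - max 1 (s - t)))"
  shows "W = q ^ (s * k - k - 1) * (q ^ k - 1)"
proof -
  obtain s2 where s: "s = Suc (Suc s2)" using t by (cases s; cases "s - 1") auto
  obtain k1 where k: "k = Suc k1" using k1 by (cases k) auto
  have ts: "t \<le> s2" using t s by simp
  have qp: "q > 0" using q2 by simp
  have e1: "s - max 0 (s - 1 - t) = Suc t" "s - max 0 (s - t) = t"
     "s - max 1 (s - 1 - t) = Suc t" "s - max 1 (s - t) = t" "s - 1 = Suc s2" "s - 2 = s2"
     "s - max 0 (Suc s2 - t) = Suc t" "s - max 1 (Suc s2 - t) = Suc t"
    using ts s by auto
  define Q where "Q = (int q)"
  have Q1: "Q \<ge> 2" using q2 Q_def by simp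
  have m1: "q ^ Suc t \<le> q ^ s" "q ^ t \<le> q ^ Suc t" "q ^ Suc t \<le> q ^ Suc s2" "q ^ Suc s2 \<le> q ^ s"
    by (rule power_increasing; use q2 ts s in simp)+
  have S0e: "S0 = (q - 1) * q ^ s2 * (q ^ s - q ^ Suc t) + q ^ Suc s2 * (q ^ Suc t - q ^ t)"
    unfolding S0 by (simp only: e1 diff_zero)
  have S1e: "S1 = (q - 1) * q ^ s2 * (q ^ Suc s2 - q ^ Suc t) + q ^ Suc s2 * (q ^ Suc t - q ^ t)"
    unfolding S1 by (simp only: e1)
  have S0i: "int S0 = (Q - 1) * Q ^ s2 * (Q ^ s - Q ^ Suc t) + Q ^ Suc s2 * (Q ^ Suc t - Q ^ t)"
    unfolding S0e Q_def using m1 q2 by (simp add: of_nat_diff del: power_Suc)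
  have S1i: "int S1 = (Q - 1) * Q ^ s2 * (Q ^ Suc s2 - Q ^ Suc t) + Q ^ Suc s2 * (Q ^ Suc t - Q ^ t)"
    unfolding S1e Q_def using m1 q2 by (simp add: of_nat_diff del: power_Suc)
  have S0v: "int S0 = (Q - 1) * Q ^ s2 * Q ^ s2 * Q * Q"
    unfolding S0i s by (simp add: algebra_simps power_add power_mult_distrib mult_2)
  have S1v: "int S1 = (Q - 1) * Q ^ s2 * Q ^ s2 * Q"
    unfolding S1i s by (simp add: algebra_simps power_add power_mult_distrib mult_2)
  have A': "(q ^ s - q ^ Suc s2) * W + SM = SL" using A by (simp only: e1)
  have d: "int (q ^ s - q ^ Suc s2) = Q ^ s - Q ^ Suc s2"
    unfolding Q_def by (simp only: of_nat_diff[OF m1(4)] of_nat_power)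
  have "int SL = int (q ^ s - q ^ Suc s2) * int W + int SM" unfolding A'[symmetric] by simp
  then have Ai: "(Q ^ s - Q ^ Suc s2) * int W + int SM = int SL" unfolding d by simp
  have Bi: "Q ^ s * int SL = (Q ^ s) ^ k * int S0"
    using B unfolding Q_def by (metis of_nat_mult of_nat_power)
  have Ci: "Q ^ Suc s2 * int SM = (Q ^ Suc s2) ^ k * int S1"
    using C unfolding e1 Q_def by (metis of_nat_mult of_nat_power)
  have Qp: "Q > 0" using Q1 by simp
  have SLv: "int SL = (Q ^ s) ^ k1 * int S0"
    using Bi Qp unfolding k by (simp add: mult.assoc)
  have SMv: "int SM = (Q ^ Suc s2) ^ k1 * int S1"
    using Ci Qp unfolding k by (simp add: mult.assoc)
  have "(Q ^ s - Q ^ Suc s2) * int W = (Q ^ s - Q ^ Suc s2) * (Q ^ (s * k - 1) - Q ^ (s * k - k - 1))"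
  proof -
    have "(Q ^ s - Q ^ Suc s2) * int W = int SL - int SM" using Ai by simp
    also have "\<dots> = (Q ^ s - Q ^ Suc s2) * (Q ^ (s * k - 1) - Q ^ (s * k - k - 1))"
    proof -
      define A where "A = Q ^ s2"
      define B where "B = (Q ^ s2) ^ k1"
      define C where "C = Q ^ k1"
      have p0: "Q ^ s = A * Q * Q" "Q ^ Suc s2 = A * Q" unfolding A_def s by simp_all
      have p1: "(Q ^ s) ^ k1 = B * C * C" unfolding B_def C_def s
        by (simp add: power_mult_distrib)
      have p2: "(Q ^ Suc s2) ^ k1 = B * C" unfolding B_def C_def
        by (simp add: power_mult_distrib)
      have e2: "s * k - 1 = s2 * k1 + s2 + k1 + k1 + 1" "s * k - k - 1 = s2 * k1 + s2 + k1"
        unfolding s k by simp_all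
      have p3: "Q ^ (s * k - 1) = B * A * C * C * Q" "Q ^ (s * k - k - 1) = B * A * C"
        unfolding e2 A_def B_def C_def by (simp_all add: power_add power_mult)
      have SL': "int SL = B * C * C * ((Q - 1) * A * A * Q * Q)"
        unfolding SLv p1 S0v A_def by simp
      have SM': "int SM = B * C * ((Q - 1) * A * A * Q)"
        unfolding SMv p2 S1v A_def by simp
      show ?thesis unfolding SL' SM' p3 p0
        by (simp add: algebra_simps)
    qed
    finally show ?thesis .
  qed
  moreover have "Q ^ Suc s2 < Q ^ s" using Q1 s by (simp add: power_strict_increasing)
  ultimately have Wi: "int W = Q ^ (s * k - 1) - Q ^ (s * k - k - 1)" by simp
  have "s * k - 1 = (s * k - k - 1) + k" using s k by simp
  then have "int W = Q ^ (s * k - k - 1) * (Q ^ k - 1)" unfolding Wi by (simp add: power_add algebra_simps)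
  moreover have "q ^ k \<ge> 1" using qp by simp
  then have "int (q ^ (s * k - k - 1) * (q ^ k - 1)) = Q ^ (s * k - k - 1) * (Q ^ k - 1)"
    unfolding Q_def by (simp add: of_nat_diff)
  ultimately have "int W = int (q ^ (s * k - k - 1) * (q ^ k - 1))" by simp
  then show ?thesis by (simp only: of_nat_eq_iff)
qed

locale cr =
  fixes g :: "'a::{comm_ring_1,finite}" and s :: nat and T :: "'a list"
  assumes chain: "chain_ring TYPE('a)" and maxi: "is_maximal_ideal (principal_ideal g)"
    and nil: "nilpotency_index g s" and reps: "coset_reps T g"
begin

abbreviation P :: "nat \<Rightarrow> 'a set" where "P j \<equiv> principal_ideal (g ^ j)"

lemma gs0: "g ^ s = 0" using nil unfolding nilpotency_index_def by auto
lemma gm_nz: "m < s \<Longrightarrow> g ^ m \<noteq> 0" using nil unfolding nilpotency_index_def by auto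
lemma zero_ne_one: "(0::'a) \<noteq> 1" using chain unfolding chain_ring_def by auto
lemma s_pos: "s \<ge> 1" using gs0 zero_ne_one by (cases s) auto

lemma y_in: "y \<in> principal_ideal y" unfolding pi_mem by (rule exI[of _ 1]) simp

lemma one_notin: "(1::'a) \<notin> principal_ideal g"
proof
  assume "1 \<in> principal_ideal g"
  then obtain z where z: "1 = g * z" unfolding pi_mem by blast
  have "\<forall>y. y \<in> principal_ideal g"
  proof
    fix y
    have "y = (g * z) * y" using z by simp
    then have "y = g * (z * y)" by (simp only: mult.assoc)
    then show "y \<in> principal_ideal g" unfolding pi_mem by blast
  qed
  moreover have "principal_ideal g \<noteq> UNIV" using maxi unfolding is_maximal_ideal_def by (elim conjE)
  ultimately show False by blast
qed

lemma unit_notin: assumes "u dvd 1" shows "u \<notin> principal_ideal g"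
proof
  assume "u \<in> principal_ideal g"
  then obtain w where w: "u = g * w" unfolding pi_mem by blast
  obtain v where v: "1 = u * v" using assms by (rule dvdE)
  have "1 = g * (w * v)" using v w by (simp add: mult.assoc)
  then show False using one_notin unfolding pi_mem by blast
qed

lemma notin_unit: assumes "y \<notin> principal_ideal g" shows "y dvd 1"
proof -
  have "principal_ideal y \<subseteq> principal_ideal g \<or> principal_ideal g \<subseteq> principal_ideal y"
    using chain pi_ideal unfolding chain_ring_def by blast
  moreover have "\<not> principal_ideal y \<subseteq> principal_ideal g"
    using assms y_in by blast
  ultimately have "principal_ideal g \<subseteq> principal_ideal y" by blast
  then have "principal_ideal y = principal_ideal g \<or> principal_ideal y = UNIV"
    using maxi pi_ideal unfolding is_maximal_ideal_def by blast
  moreover have "principal_ideal y \<noteq> principal_ideal g"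
    using assms y_in by blast
  ultimately have "principal_ideal y = UNIV" by blast
  then have "1 \<in> principal_ideal y" by simp
  then obtain k where "1 = y * k" unfolding pi_mem by blast
  then show ?thesis by (rule dvdI)
qed

lemma unit_iff: "u dvd 1 \<longleftrightarrow> u \<notin> principal_ideal g"
  using unit_notin notin_unit by (rule iffI)

lemma P0[simp]: "P 0 = UNIV" by (auto simp: principal_ideal_def)
lemma P0'[simp]: "principal_ideal 1 = UNIV" by (auto simp: principal_ideal_def)
lemma Ps: "P s = {0}" using gs0 by (auto simp: principal_ideal_def)
lemma P_mono: "a \<le> b \<Longrightarrow> P b \<subseteq> P a"
proof
  fix x assume a: "a \<le> b" "x \<in> P b"
  then obtain z where "x = g ^ b * z" unfolding pi_mem by blast
  moreover have "g ^ b = g ^ a * g ^ (b - a)" using a(1) by (simp flip: power_add)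
  ultimately have "x = g ^ a * (g ^ (b - a) * z)" by (simp add: mult.assoc)
  then show "x \<in> P a" unfolding pi_mem by blast
qed

lemma decomp: assumes "x \<noteq> 0" shows "\<exists>m<s. \<exists>u. u dvd 1 \<and> x = g ^ m * u"
proof -
  define A where "A = {m. x \<in> P m}"
  have A0: "0 \<in> A" unfolding A_def by (simp add: pi_mem)
  have Ab: "\<forall>m\<in>A. m < s"
  proof
    fix m assume "m \<in> A"
    show "m < s"
    proof (rule ccontr)
      assume "\<not> m < s"
      have "x \<in> P m" using \<open>m \<in> A\<close> unfolding A_def by blast
      then have "x \<in> P s" using P_mono[of s m] \<open>\<not> m < s\<close> by (meson not_less subsetD)
      then show False using Ps assms by simp
    qed
  qed
  have fA: "finite A" using Ab by (meson finite_nat_set_iff_bounded)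
  define m where "m = Max A"
  have mA: "m \<in> A" unfolding m_def using fA A0 Max_in by blast
  have mx: "\<forall>n\<in>A. n \<le> m" unfolding m_def using fA by simp
  obtain y where y: "x = g ^ m * y" using mA unfolding A_def mem_Collect_eq pi_mem by blast
  have "y \<notin> principal_ideal g"
  proof
    assume "y \<in> principal_ideal g"
    then obtain z where "y = g * z" unfolding pi_mem by blast
    then have "x = g ^ Suc m * z" using y by (simp add: mult.assoc mult.commute mult.left_commute)
    then have "Suc m \<in> A" unfolding A_def mem_Collect_eq pi_mem by blast
    then show False using mx by (meson Suc_n_not_le_n)
  qed
  then have "y dvd 1" by (rule notin_unit)
  moreover have "m < s" using mA Ab by blast
  ultimately show ?thesis using y by (intro exI[where x=m] conjI exI[where x=y]) (assumption+)
qed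

lemma unit_minus: assumes "u dvd 1" shows "u - g * z dvd 1"
proof -
  have "u - g * z \<notin> principal_ideal g"
  proof
    assume "u - g * z \<in> principal_ideal g"
    then obtain w where w: "u - g * z = g * w" unfolding pi_mem by blast
    have "u = (u - g * z) + g * z" by simp
    also have "\<dots> = g * w + g * z" using w by simp
    also have "\<dots> = g * (w + z)" by (simp add: distrib_left)
    finally have "u \<in> principal_ideal g" unfolding pi_mem by blast
    then show False using unit_notin[OF assms] by blast
  qed
  then show ?thesis by (rule notin_unit)
qed

lemma unit_cancel0: fixes a :: 'a assumes "u dvd 1" "a * u = 0" shows "a = 0"
proof -
  obtain v where v: "1 = u * v" using assms(1) by (rule dvdE)
  have "a = a * (u * v)" using v by simp
  also have "\<dots> = (a * u) * v" by (simp add: mult.assoc)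
  also have "\<dots> = 0" using assms(2) by simp
  finally show ?thesis .
qed

lemma ldiv: assumes "u dvd 1" "m < s" "g ^ m * u = g ^ n * y" shows "n \<le> m"
proof (rule ccontr)
  assume "\<not> n \<le> m"
  then have "n = m + Suc (n - m - 1)" by simp
  then have "g ^ n = g ^ (m + Suc (n - m - 1))" by (rule arg_cong)
  then have "g ^ n = g ^ m * (g * g ^ (n - m - 1))"
    by (simp only: power_add power_Suc)
  then have "g ^ n = g ^ m * g * g ^ (n - m - 1)" by (simp only: mult.assoc)
  then have "g ^ m * (u - g * (g ^ (n - m - 1) * y)) = 0" using assms(3)
    by (simp add: algebra_simps)
  then have "g ^ m = 0" using unit_cancel0 unit_minus[OF assms(1)] by blast
  then show False using gm_nz assms(2) by simp
qed


lemma Pmem_pow: assumes "n \<le> s" "g ^ t * a \<in> P n" shows "a \<in> P (n - t)"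
proof (cases "a = 0")
  case True then show ?thesis unfolding pi_mem by (intro exI[of _ 0]) simp
next
  case False
  then obtain m u where mu: "m < s" "u dvd 1" "a = g ^ m * u" using decomp by blast
  have "n - t \<le> m"
  proof (cases "t + m < s")
    case True
    obtain y where "g ^ t * a = g ^ n * y" using assms(2) unfolding pi_mem by blast
    then have "g ^ (t + m) * u = g ^ n * y" using mu by (simp add: power_add mult.assoc)
    then have "n \<le> t + m" using ldiv[OF mu(2) True] by blast
    then show ?thesis by simp
  next
    case False then show ?thesis using assms(1) by simp
  qed
  then have "a = g ^ (n - t) * (g ^ (m - (n - t)) * u)"
    using mu by (simp add: mult.assoc[symmetric] power_add[symmetric])
  then show ?thesis unfolding pi_mem by blast
qed

lemma ann: assumes "j \<le> s" "g ^ j * d = 0" shows "d \<in> P (s - j)"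
proof -
  have "g ^ j * d \<in> P s" unfolding pi_mem using assms(2) gs0 by (intro exI[of _ 0]) simp
  then show ?thesis using Pmem_pow[of s j d] by simp
qed

lemma val_eq: assumes "u dvd 1" "m < s" shows "val g (g ^ m * u) = enat m"
proof -
  have nz: "g ^ m * u \<noteq> 0" using unit_cancel0[OF assms(1)] gm_nz[OF assms(2)] by blast
  have "(GREATEST n. \<exists>b. b dvd 1 \<and> g ^ m * u = g ^ n * b) = m"
  proof (rule Greatest_equality)
    show "\<exists>b. b dvd 1 \<and> g ^ m * u = g ^ m * b" using assms by blast
    fix y assume "\<exists>b. b dvd 1 \<and> g ^ m * u = g ^ y * b"
    then show "y \<le> m" using ldiv[OF assms] by blast
  qed
  then show ?thesis using nz unfolding val_def by simp
qed

lemma P_ideal: "is_ideal (P j)" by (rule pi_ideal)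

lemma ideal_add: "is_ideal I \<Longrightarrow> x \<in> I \<Longrightarrow> y \<in> I \<Longrightarrow> x + y \<in> I"
  unfolding is_ideal_def by blast

lemma ideal_mult: "is_ideal I \<Longrightarrow> x \<in> I \<Longrightarrow> r * x \<in> I"
  unfolding is_ideal_def by blast

lemma ideal_sum: assumes "is_ideal I" "\<And>i. i \<in> A \<Longrightarrow> f i \<in> I" shows "sum f A \<in> I"
  using assms(2)
proof (induction A rule: infinite_finite_induct)
  case (infinite A) then show ?case using assms(1) unfolding is_ideal_def by simp
next
  case empty then show ?case using assms(1) unfolding is_ideal_def by simp
next
  case (insert x F)
  then have "f x \<in> I" "sum f F \<in> I" by auto
  then show ?case using insert(1,2) ideal_add[OF assms(1)] by simp
qed

lemma ideal_neg: assumes "is_ideal I" "x \<in> I" shows "- x \<in> I"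
proof -
  have "(- 1) * x \<in> I" by (rule ideal_mult[OF assms])
  then show ?thesis by simp
qed

lemma ideal_diff: assumes "is_ideal I" "x \<in> I" "y \<in> I" shows "x - y \<in> I"
proof -
  have "x + (- y) \<in> I" using ideal_add[OF assms(1,2) ideal_neg[OF assms(1,3)]] .
  then show ?thesis by simp
qed

lemma ideal_zero: "is_ideal I \<Longrightarrow> 0 \<in> I"
  unfolding is_ideal_def by blast

lemma q_ge2: "length T \<ge> 2" using reps unfolding coset_reps_def by (elim conjE)
lemma T0: "T ! 0 = 0" using reps unfolding coset_reps_def by (elim conjE)
lemma T1: "T ! 1 = 1" using reps unfolding coset_reps_def by (elim conjE)

lemma rep_ex: "\<exists>i < length T. x - T ! i \<in> principal_ideal g"
proof -
  have "\<exists>!i. i < length T \<and> x - T ! i \<in> principal_ideal g"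
    using reps unfolding coset_reps_def by (elim conjE allE)
  then show ?thesis by (elim ex1E) blast
qed

lemma rep_uniq: assumes a: "i < length T" "j < length T" "T ! i - T ! j \<in> principal_ideal g"
  shows "i = j"
proof -
  have h: "T ! i - T ! i \<in> principal_ideal g" unfolding pi_mem by (intro exI[of _ 0]) simp
  have "\<exists>!n. n < length T \<and> T ! i - T ! n \<in> principal_ideal g"
    using reps unfolding coset_reps_def by (elim conjE allE)
  then show "i = j" using a h by (elim ex1E) blast
qed


abbreviation q where "q \<equiv> length T"

lemma q_pos: "q > 0" using q_ge2 by linarith

lemma rho0: "rho T g 0 n = 0" unfolding rho_def by simp

lemma rho_Suc: "rho T g (Suc m) n = T ! (n mod q) + g * rho T g m (n div q)"
proof -
  have "rho T g (Suc m) n = T ! ((n div q ^ 0) mod q) * g ^ 0 +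
      (\<Sum>i<m. T ! ((n div q ^ Suc i) mod q) * g ^ Suc i)"
    unfolding rho_def by (rule sum.lessThan_Suc_shift)
  also have "(\<Sum>i<m. T ! ((n div q ^ Suc i) mod q) * g ^ Suc i) =
      (\<Sum>i<m. g * (T ! ((n div q div q ^ i) mod q) * g ^ i))"
    by (rule sum.cong) (simp_all add: div_mult2_eq mult.commute mult.left_commute)
  also have "\<dots> = g * rho T g m (n div q)"
    unfolding rho_def by (simp add: sum_distrib_left)
  finally show ?thesis by simp
qed

lemma rho_surj: "\<exists>n < q ^ m. r - rho T g m n \<in> P m"
proof (induction m arbitrary: r)
  case 0
  show ?case by (auto simp: principal_ideal_def)
next
  case (Suc m)
  obtain i where i: "i < q" "r - T ! i \<in> principal_ideal g" using rep_ex by blast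
  then obtain r1 where r1: "r - T ! i = g * r1" unfolding pi_mem by blast
  obtain n1 where n1: "n1 < q ^ m" "r1 - rho T g m n1 \<in> P m" using Suc.IH by blast
  then obtain r2 where r2: "r1 - rho T g m n1 = g ^ m * r2" unfolding pi_mem by blast
  define n where "n = i + q * n1"
  have nmod: "n mod q = i" unfolding n_def using i(1) by simp
  have ndiv: "n div q = n1" unfolding n_def using i(1) q_pos by simp
  have nlt: "n < q ^ Suc m"
  proof -
    have "n < q + q * n1" unfolding n_def using i(1) by simp
    also have "\<dots> = q * (n1 + 1)" by (simp add: algebra_simps)
    also have "\<dots> \<le> q * q ^ m" using n1(1) by (intro mult_le_mono2) simp
    finally show ?thesis by simp
  qed
  have "r - rho T g (Suc m) n = (r - T ! i) - g * rho T g m n1"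
    unfolding rho_Suc nmod ndiv by (simp add: algebra_simps)
  also have "\<dots> = g * (r1 - rho T g m n1)" using r1 by (simp add: algebra_simps)
  also have "\<dots> = g ^ Suc m * r2" using r2 by (simp add: mult.assoc)
  finally have "r - rho T g (Suc m) n \<in> P (Suc m)" unfolding pi_mem by blast
  then show ?case using nlt by blast
qed

lemma rho_inj: "m \<le> s \<Longrightarrow> n < q ^ m \<Longrightarrow> n' < q ^ m \<Longrightarrow>
   rho T g m n - rho T g m n' \<in> P m \<Longrightarrow> n = n'"
proof (induction m arbitrary: n n')
  case 0 then show ?case by simp
next
  case (Suc m)
  obtain y where y: "rho T g (Suc m) n - rho T g (Suc m) n' = g ^ Suc m * y"
    using Suc.prems(4) unfolding pi_mem by blast
  define d where "d = rho T g m (n div q) - rho T g m (n' div q)"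
  have eq: "T ! (n mod q) - T ! (n' mod q) = g * (g ^ m * y - d)"
    using y unfolding rho_Suc d_def by (simp add: algebra_simps)
  have md: "n mod q = n' mod q"
    by (rule rep_uniq) (use eq q_pos in \<open>auto simp: pi_mem\<close>)
  then have "g * d = g ^ Suc m * y" using eq by (simp add: algebra_simps)
  then have "g ^ 1 * (d - g ^ m * y) = 0" by (simp add: algebra_simps)
  then have "d - g ^ m * y \<in> P (s - 1)" using ann[of 1] s_pos by blast
  moreover have "P (s - 1) \<subseteq> P m" using Suc.prems(1) by (intro P_mono) simp
  ultimately have "d - g ^ m * y \<in> P m" by blast
  then obtain z where z: "d - g ^ m * y = g ^ m * z" unfolding pi_mem by blast
  have "d = (d - g ^ m * y) + g ^ m * y" by simp
  also have "\<dots> = g ^ m * (y + z)" using z by (simp add: distrib_left add.commute)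
  finally have "d = g ^ m * (y + z)" .
  then have "d \<in> P m" unfolding pi_mem by blast
  moreover have "n div q < q ^ m" "n' div q < q ^ m"
    using Suc.prems(2,3) by (simp_all add: less_mult_imp_div_less mult.commute)
  ultimately have dq: "n div q = n' div q" using Suc.IH[of "n div q" "n' div q"] Suc.prems(1)
    unfolding d_def by simp
  have "n = n div q * q + n mod q" by simp
  also have "\<dots> = n' div q * q + n' mod q" using md dq by simp
  also have "\<dots> = n'" by simp
  finally show ?case .
qed

lemma bijP: assumes "j \<le> s"
  shows "bij_betw (\<lambda>n. g ^ j * rho T g (s - j) n) {..<q ^ (s - j)} (P j)"
proof (rule bij_betw_imageI)
  show "inj_on (\<lambda>n. g ^ j * rho T g (s - j) n) {..<q ^ (s - j)}"
  proof (rule inj_onI)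
    fix n n' assume a: "n \<in> {..<q ^ (s - j)}" "n' \<in> {..<q ^ (s - j)}"
      "g ^ j * rho T g (s - j) n = g ^ j * rho T g (s - j) n'"
    then have "g ^ j * (rho T g (s - j) n - rho T g (s - j) n') = 0"
      by (simp add: right_diff_distrib)
    then have "rho T g (s - j) n - rho T g (s - j) n' \<in> P (s - j)" using ann assms by blast
    then show "n = n'" using rho_inj[of "s - j" n n'] a by simp
  qed
  show "(\<lambda>n. g ^ j * rho T g (s - j) n) ` {..<q ^ (s - j)} = P j"
  proof (intro set_eqI iffI)
    fix y assume "y \<in> (\<lambda>n. g ^ j * rho T g (s - j) n) ` {..<q ^ (s - j)}"
    then show "y \<in> P j" unfolding pi_mem by blast
  next
    fix y assume "y \<in> P j"
    then obtain r where r: "y = g ^ j * r" unfolding pi_mem by blast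
    obtain n where n: "n < q ^ (s - j)" "r - rho T g (s - j) n \<in> P (s - j)"
      using rho_surj by blast
    then obtain z where z: "r - rho T g (s - j) n = g ^ (s - j) * z" unfolding pi_mem by blast
    have "g ^ j * (r - rho T g (s - j) n) = g ^ (j + (s - j)) * z"
      using z by (simp add: power_add mult.assoc)
    also have "\<dots> = 0" using assms gs0 by simp
    finally have "y = g ^ j * rho T g (s - j) n" using r by (simp add: right_diff_distrib)
    then show "y \<in> (\<lambda>n. g ^ j * rho T g (s - j) n) ` {..<q ^ (s - j)}" using n(1) by blast
  qed
qed

lemma card_P: "j \<le> s \<Longrightarrow> card (P j) = q ^ (s - j)"
  using bij_betw_same_card[OF bijP] by simp

lemma card_UNIV: "card (UNIV :: 'a set) = q ^ s"
  using card_P[of 0] by simp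

lemma bij_rho: "bij_betw (rho T g s) {..<q ^ s} UNIV"
  using bijP[of 0] by simp

lemma gel_eq: "gel T g s j = g * rho T g (s - 1) j"
proof -
  obtain m where m: "s = Suc m" using s_pos by (cases s) auto
  have "gel T g s j = rho T g (Suc m) (j * q)" unfolding gel_def m by simp
  also have "\<dots> = g * rho T g m j" unfolding rho_Suc using q_pos by (simp add: T0)
  finally show ?thesis using m by simp
qed

lemma bij_gel: "bij_betw (gel T g s) {..<q ^ (s - 1)} (P 1)"
  using bijP[of 1] s_pos by (simp add: gel_eq[abs_def])


definition LI :: "'a set \<Rightarrow> nat \<Rightarrow> 'a list set" where
  "LI I k = {v. set v \<subseteq> I \<and> length v = k}"

lemma LI_finite: "finite (LI I k)"
  unfolding LI_def by (rule finite_lists_length_eq) simp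

lemma LI_card: "card (LI I k) = card I ^ k"
  unfolding LI_def by (rule card_lists_length_eq) simp

lemma LI_0: "LI I 0 = {[]}" unfolding LI_def by auto

lemma LI_Suc_img: "LI I (Suc n) = (\<lambda>(r, v). r # v) ` (I \<times> LI I n)"
proof (intro set_eqI iffI)
  fix w assume "w \<in> LI I (Suc n)"
  then obtain r v where "w = r # v" "r \<in> I" "v \<in> LI I n"
    unfolding LI_def by (cases w) auto
  then show "w \<in> (\<lambda>(r, v). r # v) ` (I \<times> LI I n)" by force
next
  fix w assume "w \<in> (\<lambda>(r, v). r # v) ` (I \<times> LI I n)"
  then show "w \<in> LI I (Suc n)" unfolding LI_def by auto
qed

lemma LI_Suc_sum: "(\<Sum>w\<in>LI I (Suc n). F w) = (\<Sum>r\<in>I. \<Sum>v\<in>LI I n. F (r # v))"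
proof -
  have inj: "inj_on (\<lambda>(r, v). r # v) (I \<times> LI I n)" by (auto simp: inj_on_def)
  have "(\<Sum>w\<in>LI I (Suc n). F w) = (\<Sum>x\<in>I \<times> LI I n. F ((\<lambda>(r, v). r # v) x))"
    unfolding LI_Suc_img by (rule sum.reindex[OF inj, unfolded comp_def])
  also have "\<dots> = (\<Sum>(r, v)\<in>I \<times> LI I n. F (r # v))"
    by (rule sum.cong) auto
  also have "\<dots> = (\<Sum>r\<in>I. \<Sum>v\<in>LI I n. F (r # v))"
    by (rule sum.cartesian_product[symmetric])
  finally show ?thesis .
qed

lemma sum_list_concat_map: "sum_list (map F (concat xss)) = sum_list (map (\<lambda>xs. sum_list (map F xs)) xss)"
  by (induction xss) simp_all

lemma sum_list_sum_swap:
  "sum_list (map (\<lambda>b. \<Sum>a\<in>A. f a b) xs) = (\<Sum>a\<in>A. sum_list (map (f a) xs))"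
  by (induction xs) (simp_all add: sum.distrib)

lemma upt_sum: "sum_list (map f [0..<n]) = (\<Sum>j<n. f j)"
  by (simp add: interv_sum_list_conv_sum_set_nat atLeast0LessThan)

lemma alpha_sum:
  "sum_list (map F (alpha_cols T g s (Suc m))) = (\<Sum>v\<in>LI UNIV (Suc m). F v)"
proof (induction m arbitrary: F)
  case 0
  have "sum_list (map F (alpha_cols T g s (Suc 0))) = (\<Sum>j<q ^ s. F [rho T g s j])"
    by (simp add: upt_sum comp_def)
  also have "\<dots> = (\<Sum>r\<in>UNIV. F [r])"
    by (rule sum.reindex_bij_betw[OF bij_rho])
  also have "\<dots> = (\<Sum>v\<in>LI UNIV (Suc 0). F v)"
    unfolding LI_Suc_sum LI_0 by simp
  finally show ?case .
next
  case (Suc m)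
  have "sum_list (map F (alpha_cols T g s (Suc (Suc m)))) =
     (\<Sum>j<q ^ s. sum_list (map (\<lambda>col. F (rho T g s j # col)) (alpha_cols T g s (Suc m))))"
    by (simp add: sum_list_concat_map upt_sum comp_def)
  also have "\<dots> = (\<Sum>j<q ^ s. \<Sum>v\<in>LI UNIV (Suc m). F (rho T g s j # v))"
    by (rule sum.cong[OF refl]) (rule Suc.IH)
  also have "\<dots> = (\<Sum>r\<in>UNIV. \<Sum>v\<in>LI UNIV (Suc m). F (r # v))"
    by (rule sum.reindex_bij_betw[OF bij_rho])
  also have "\<dots> = (\<Sum>v\<in>LI UNIV (Suc (Suc m)). F v)"
    unfolding LI_Suc_sum ..
  finally show ?case .
qed


definition U :: "'a set" where "U = {u. u dvd 1}"
definition nz :: "'a list \<Rightarrow> bool" where "nz v \<longleftrightarrow> (\<exists>x\<in>set v. x \<notin> principal_ideal g)"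
definition N :: "nat \<Rightarrow> 'a list set" where "N k = {v \<in> LI UNIV k. nz v}"

lemma U_eq: "U = - principal_ideal g" unfolding U_def using unit_iff by auto

lemma unit_inv: fixes u :: 'a assumes "u dvd 1" obtains u' where "u * u' = 1" "u' dvd 1"
proof -
  obtain u' where u': "1 = u * u'" using assms by (rule dvdE)
  then have "1 = u' * u" by (simp add: mult.commute)
  then have "u' dvd 1" by (rule dvdI)
  moreover have "u * u' = 1" using u' by simp
  ultimately show ?thesis using that by blast
qed

lemma mm_inv: "(u::'a) * u' = 1 \<Longrightarrow> map ((*) u) (map ((*) u') v) = v"
  by (induction v) (simp_all add: mult.assoc[symmetric])

lemma mm_inv': "(u::'a) * u' = 1 \<Longrightarrow> map ((*) u') (map ((*) u) v) = v"
  by (induction v) (simp_all add: mult.assoc[symmetric] mult.commute[of u' u])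

lemma mmc: "(u::'a) * u' = 1 \<Longrightarrow> map ((*) u \<circ> (*) u') v = v"
  using mm_inv by simp

lemma mmc': "(u::'a) * u' = 1 \<Longrightarrow> map ((*) u' \<circ> (*) u) v = v"
  using mm_inv' by simp

lemma scale_L: assumes "(u::'a) * u' = 1"
  shows "(\<Sum>v\<in>LI UNIV k. H (map ((*) u') v)) = (\<Sum>v\<in>LI UNIV k. H v)"
  by (rule sum.reindex_bij_witness[where i = "map ((*) u)" and j = "map ((*) u')"])
     (simp_all add: mmc[OF assms] mmc'[OF assms] LI_def)

lemma scale_P1: assumes "(u::'a) * u' = 1"
  shows "(\<Sum>a\<in>principal_ideal g. H (u' * a)) = (\<Sum>a\<in>principal_ideal g. H a)"
proof (rule sum.reindex_bij_witness[where i = "(*) u" and j = "(*) u'"])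
  fix a show "u * (u' * a) = a" using assms by (simp add: mult.assoc[symmetric])
next
  fix a show "u' * (u * a) = a" using assms by (simp add: mult.assoc[symmetric] mult.commute[of u' u])
next
  fix a assume "a \<in> principal_ideal g" then show "u' * a \<in> principal_ideal g"
    using ideal_mult[OF pi_ideal] by blast
next
  fix a assume "a \<in> principal_ideal g" then show "u * a \<in> principal_ideal g"
    using ideal_mult[OF pi_ideal] by blast
qed simp

lemma sum_N: "(\<Sum>v\<in>N k. F v) = (\<Sum>v\<in>LI UNIV k. if nz v then F v else 0)"
  unfolding N_def by (rule sum.inter_filter[OF LI_finite])

lemma sum_UNIV_split: "(\<Sum>r\<in>UNIV. f r) = (\<Sum>r\<in>U. f r) + (\<Sum>r\<in>principal_ideal g. f r)"
proof -
  have "UNIV = U \<union> principal_ideal g" unfolding U_eq by auto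
  moreover have "U \<inter> principal_ideal g = {}" unfolding U_eq by auto
  ultimately show ?thesis by (metis finite sum.union_disjoint)
qed

lemma beta_avg:
  assumes "\<And>u v. u dvd 1 \<Longrightarrow> length v = Suc m \<Longrightarrow> F (map ((*) u) v) = F v"
  shows "card U * sum_list (map F (beta_cols T g s (Suc m))) = (\<Sum>v\<in>N (Suc m). (F v :: nat))"
  using assms
proof (induction m arbitrary: F)
  case 0
  have "(\<Sum>v\<in>N (Suc 0). F v) = (\<Sum>r\<in>UNIV. if nz [r] then F [r] else 0)"
    unfolding sum_N LI_Suc_sum LI_0 by simp
  also have "\<dots> = (\<Sum>r\<in>U. if nz [r] then F [r] else 0) + (\<Sum>r\<in>principal_ideal g. if nz [r] then F [r] else 0)"
    by (rule sum_UNIV_split)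
  also have "(\<Sum>r\<in>principal_ideal g. if nz [r] then F [r] else 0) = 0"
    by (rule sum.neutral) (simp add: nz_def)
  also have "(\<Sum>r\<in>U. if nz [r] then F [r] else 0) = (\<Sum>r\<in>U. F [1])"
  proof (rule sum.cong[OF refl])
    fix r assume r: "r \<in> U"
    then have "nz [r]" unfolding nz_def U_eq by simp
    moreover have "F (map ((*) r) [1]) = F [1]" by (rule 0) (use r in \<open>simp_all add: U_def\<close>)
    ultimately show "(if nz [r] then F [r] else 0) = F [1]" by simp
  qed
  finally show ?case by simp
next
  case (Suc m)
  define G where "G v = (\<Sum>a\<in>principal_ideal g. F (a # v))" for v
  have Ginv: "G (map ((*) u) v) = G v" if u: "u dvd 1" and lv: "length v = Suc m" for u v
  proof -
    obtain u' where u': "u * u' = 1" "u' dvd 1" using unit_inv[OF u] by blast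
    have "G (map ((*) u) v) = (\<Sum>a\<in>principal_ideal g. F (u' * a # v))"
      unfolding G_def
    proof (rule sum.cong[OF refl])
      fix a
      have "F (a # map ((*) u) v) = F (map ((*) u) (u' * a # v))"
        using u' by (simp add: mult.assoc[symmetric])
      also have "\<dots> = F (u' * a # v)" by (rule Suc.prems[OF u]) (simp add: lv)
      finally show "F (a # map ((*) u) v) = F (u' * a # v)" .
    qed
    also have "\<dots> = G v" unfolding G_def by (rule scale_P1[OF u'(1)])
    finally show ?thesis .
  qed
  have "sum_list (map F (beta_cols T g s (Suc (Suc m)))) =
     sum_list (map (\<lambda>col. F (1 # col)) (alpha_cols T g s (Suc m))) +
     (\<Sum>j<q ^ (s - 1). sum_list (map (\<lambda>b. F (gel T g s j # b)) (beta_cols T g s (Suc m))))"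
    by (simp add: sum_list_concat_map upt_sum comp_def)
  also have "sum_list (map (\<lambda>col. F (1 # col)) (alpha_cols T g s (Suc m))) =
      (\<Sum>v\<in>LI UNIV (Suc m). F (1 # v))" by (rule alpha_sum)
  also have "(\<Sum>j<q ^ (s - 1). sum_list (map (\<lambda>b. F (gel T g s j # b)) (beta_cols T g s (Suc m))))
      = (\<Sum>a\<in>principal_ideal g. sum_list (map (\<lambda>b. F (a # b)) (beta_cols T g s (Suc m))))"
    using sum.reindex_bij_betw[OF bij_gel, of "\<lambda>a. sum_list (map (\<lambda>b. F (a # b)) (beta_cols T g s (Suc m)))"]
    by simp
  also have "\<dots> = sum_list (map G (beta_cols T g s (Suc m)))"
    unfolding G_def by (rule sum_list_sum_swap[symmetric])
  finally have lhs: "card U * sum_list (map F (beta_cols T g s (Suc (Suc m)))) =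
      card U * (\<Sum>v\<in>LI UNIV (Suc m). F (1 # v)) + (\<Sum>v\<in>N (Suc m). G v)"
    using Suc.IH[of G] Ginv by (simp add: distrib_left)
  have "(\<Sum>v\<in>N (Suc (Suc m)). F v) =
      (\<Sum>r\<in>UNIV. \<Sum>v\<in>LI UNIV (Suc m). if nz (r # v) then F (r # v) else 0)"
    unfolding sum_N LI_Suc_sum ..
  also have "\<dots> = (\<Sum>r\<in>U. \<Sum>v\<in>LI UNIV (Suc m). if nz (r # v) then F (r # v) else 0) +
       (\<Sum>r\<in>principal_ideal g. \<Sum>v\<in>LI UNIV (Suc m). if nz (r # v) then F (r # v) else 0)"
    by (rule sum_UNIV_split)
  also have "(\<Sum>r\<in>U. \<Sum>v\<in>LI UNIV (Suc m). if nz (r # v) then F (r # v) else 0) =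
      (\<Sum>r\<in>U. \<Sum>v\<in>LI UNIV (Suc m). F (1 # v))"
  proof (rule sum.cong[OF refl])
    fix r assume r: "r \<in> U"
    then have ru: "r dvd 1" unfolding U_def by simp
    obtain r' where r': "r * r' = 1" "r' dvd 1" using unit_inv[OF ru] by blast
    have "(\<Sum>v\<in>LI UNIV (Suc m). if nz (r # v) then F (r # v) else 0) =
        (\<Sum>v\<in>LI UNIV (Suc m). F (1 # map ((*) r') v))"
    proof (rule sum.cong[OF refl])
      fix v assume v: "v \<in> LI UNIV (Suc m)"
      have "nz (r # v)" using r unfolding nz_def U_eq by simp
      moreover have "F (r # v) = F (map ((*) r) (1 # map ((*) r') v))"
        using mm_inv[OF r'(1)] by simp
      moreover have "\<dots> = F (1 # map ((*) r') v)"
        by (rule Suc.prems[OF ru]) (use v in \<open>simp add: LI_def\<close>)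
      ultimately show "(if nz (r # v) then F (r # v) else 0) = F (1 # map ((*) r') v)" by simp
    qed
    also have "\<dots> = (\<Sum>v\<in>LI UNIV (Suc m). F (1 # v))"
      by (rule scale_L[OF r'(1)])
    finally show "(\<Sum>v\<in>LI UNIV (Suc m). if nz (r # v) then F (r # v) else 0) =
        (\<Sum>v\<in>LI UNIV (Suc m). F (1 # v))" .
  qed
  also have "(\<Sum>r\<in>principal_ideal g. \<Sum>v\<in>LI UNIV (Suc m). if nz (r # v) then F (r # v) else 0) =
      (\<Sum>r\<in>principal_ideal g. \<Sum>v\<in>N (Suc m). F (r # v))"
  proof (rule sum.cong[OF refl])
    fix r assume r: "r \<in> principal_ideal g"
    have "(\<Sum>v\<in>LI UNIV (Suc m). if nz (r # v) then F (r # v) else 0) =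
        (\<Sum>v\<in>LI UNIV (Suc m). if nz v then F (r # v) else 0)"
      using r by (intro sum.cong) (simp_all add: nz_def)
    then show "(\<Sum>v\<in>LI UNIV (Suc m). if nz (r # v) then F (r # v) else 0) =
        (\<Sum>v\<in>N (Suc m). F (r # v))" unfolding sum_N .
  qed
  also have "\<dots> = (\<Sum>v\<in>N (Suc m). G v)"
    unfolding G_def by (rule sum.swap)
  finally show ?case using lhs by simp
qed


definition dot :: "nat \<Rightarrow> (nat \<Rightarrow> 'a) \<Rightarrow> 'a list \<Rightarrow> 'a" where
  "dot k x v = (\<Sum>i<k. x i * v ! i)"

lemma dot_upd: assumes "i < k" "length v = k"
  shows "dot k x (v[i := c]) = dot k x v + x i * (c - v ! i)"
proof -
  have "dot k x (v[i := c]) = (\<Sum>j<k. x j * v ! j + (if j = i then x i * (c - v ! i) else 0))"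
    unfolding dot_def
    by (rule sum.cong[OF refl]) (use assms in \<open>auto simp: nth_list_update algebra_simps\<close>)
  also have "\<dots> = dot k x v + x i * (c - v ! i)"
    unfolding dot_def sum.distrib using assms(1) by simp
  finally show ?thesis .
qed

lemma dot_in: assumes "is_ideal I" "v \<in> LI I k" shows "dot k x v \<in> I"
  unfolding dot_def
proof (rule ideal_sum[OF assms(1)])
  fix j assume "j \<in> {..<k}"
  then have "v ! j \<in> I" using assms(2) unfolding LI_def by (auto intro: nth_mem)
  then show "x j * v ! j \<in> I" by (rule ideal_mult[OF assms(1)])
qed

lemma shift_I: assumes "is_ideal I" "b \<in> I"
  shows "(\<Sum>a\<in>I. h (b + a)) = (\<Sum>a\<in>I. h a)"
  by (rule sum.reindex_bij_witness[where i = "\<lambda>a. a - b" and j = "\<lambda>a. b + a"])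
     (use assms in \<open>auto intro: ideal_add ideal_diff\<close>)

lemma shift_L: assumes I: "is_ideal I" and i: "i < k" and e: "x i * e = 1" and a: "a \<in> I"
  shows "(\<Sum>v\<in>LI I k. h (dot k x v + a)) = (\<Sum>v\<in>LI I k. h (dot k x v))"
proof (rule sum.reindex_bij_witness[where i = "\<lambda>v. v[i := v ! i - e * a]" and j = "\<lambda>v. v[i := v ! i + e * a]"])
  have ea: "e * a \<in> I" by (rule ideal_mult[OF I a])
  fix v assume v: "v \<in> LI I k"
  then have lv: "length v = k" and sv: "set v \<subseteq> I" unfolding LI_def by auto
  have vi: "v ! i \<in> I" using sv lv i by (auto intro: nth_mem)
  show "(v[i := v ! i + e * a])[i := (v[i := v ! i + e * a]) ! i - e * a] = v"
    using lv i by simp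
  show "(v[i := v ! i - e * a])[i := (v[i := v ! i - e * a]) ! i + e * a] = v"
    using lv i by simp
  have "set (v[i := v ! i + e * a]) \<subseteq> insert (v ! i + e * a) (set v)" by (rule set_update_subset_insert)
  then show "v[i := v ! i + e * a] \<in> LI I k" using sv lv ideal_add[OF I vi ea] unfolding LI_def by auto
  have "set (v[i := v ! i - e * a]) \<subseteq> insert (v ! i - e * a) (set v)" by (rule set_update_subset_insert)
  then show "v[i := v ! i - e * a] \<in> LI I k" using sv lv ideal_diff[OF I vi ea] unfolding LI_def by auto
  have "dot k x (v[i := v ! i + e * a]) = dot k x v + x i * (e * a)"
    using dot_upd[OF i lv] by simp
  also have "x i * (e * a) = a" using e by (simp add: mult.assoc[symmetric])
  finally show "h (dot k x (v[i := v ! i + e * a])) = h (dot k x v + a)" by simp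
qed

lemma trans_sum: assumes I: "is_ideal I" and i: "i < k" and e: "x i * e = 1"
  shows "card I * (\<Sum>v\<in>LI I k. (h (dot k x v) :: nat)) = card (LI I k) * (\<Sum>a\<in>I. h a)"
proof -
  have "card I * (\<Sum>v\<in>LI I k. h (dot k x v)) = (\<Sum>a\<in>I. \<Sum>v\<in>LI I k. h (dot k x v))"
    by simp
  also have "\<dots> = (\<Sum>a\<in>I. \<Sum>v\<in>LI I k. h (dot k x v + a))"
    by (rule sum.cong[OF refl]) (rule shift_L[where x = x and i = i and e = e, OF I i e, symmetric])
  also have "\<dots> = (\<Sum>v\<in>LI I k. \<Sum>a\<in>I. h (dot k x v + a))"
    by (rule sum.swap)
  also have "\<dots> = (\<Sum>v\<in>LI I k. \<Sum>a\<in>I. h a)"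
    by (rule sum.cong[OF refl]) (rule shift_I[OF I dot_in[OF I]])
  also have "\<dots> = card (LI I k) * (\<Sum>a\<in>I. h a)" by simp
  finally show ?thesis .
qed

lemma three_sum: assumes "finite A" "C \<subseteq> B" "B \<subseteq> A"
  shows "(\<Sum>a\<in>A. if a \<in> C then 0 else if a \<in> B then W2 else (W1::nat)) =
     W1 * (card A - card B) + W2 * (card B - card C)"
proof -
  have fB: "finite B" using finite_subset[OF assms(3,1)] .
  have fC: "finite C" using finite_subset[OF assms(2) fB] .
  let ?f = "\<lambda>a. if a \<in> C then 0 else if a \<in> B then W2 else (W1::nat)"
  have 1: "sum ?f A = sum ?f (A - B) + sum ?f B" using sum.subset_diff[OF assms(3,1)] .
  have 2: "sum ?f (A - B) = sum (\<lambda>_. W1) (A - B)"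
    by (rule sum.cong[OF refl]) (use assms(2) in auto)
  have 3: "sum ?f B = sum ?f (B - C) + sum ?f C" using sum.subset_diff[OF assms(2) fB] .
  have 4: "sum ?f (B - C) = sum (\<lambda>_. W2) (B - C)"
    by (rule sum.cong[OF refl]) simp
  have 5: "sum ?f C = 0" by (rule sum.neutral) simp
  have 6: "card (A - B) = card A - card B" by (rule card_Diff_subset[OF fB assms(3)])
  have 7: "card (B - C) = card B - card C" by (rule card_Diff_subset[OF fC assms(2)])
  show ?thesis unfolding 1 2 3 4 5 by (simp add: 6 7 mult.commute)
qed

abbreviation w where "w \<equiv> hom_weight q g s"

lemma P_inter: "a \<in> P j \<Longrightarrow> a \<in> P (max j n) \<longleftrightarrow> a \<in> P n"
proof (cases "n \<le> j")
  case True then show "a \<in> P j \<Longrightarrow> ?thesis" using P_mono[OF True] by (auto simp: max_def)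
next
  case False then show "a \<in> P j \<Longrightarrow> ?thesis" by (simp add: max_def)
qed

lemma gt_zero_iff: assumes "t < s" shows "g ^ t * a = 0 \<longleftrightarrow> a \<in> P (s - t)"
proof
  assume "g ^ t * a = 0" then show "a \<in> P (s - t)" using ann assms by simp
next
  assume "a \<in> P (s - t)"
  then obtain z where "a = g ^ (s - t) * z" unfolding pi_mem by blast
  then have "g ^ t * a = g ^ (t + (s - t)) * z" by (simp add: power_add mult.assoc)
  then show "g ^ t * a = 0" using assms gs0 by simp
qed

lemma gt_top_iff: assumes "t < s" shows "g ^ t * a \<in> P (s - 1) \<longleftrightarrow> a \<in> P (s - 1 - t)"
proof
  assume "g ^ t * a \<in> P (s - 1)" then show "a \<in> P (s - 1 - t)" using Pmem_pow[of "s - 1" t a] by simp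
next
  assume "a \<in> P (s - 1 - t)"
  then obtain z where "a = g ^ (s - 1 - t) * z" unfolding pi_mem by blast
  then have "g ^ t * a = g ^ (t + (s - 1 - t)) * z" by (simp add: power_add mult.assoc)
  also have "t + (s - 1 - t) = s - 1" using assms by simp
  finally show "g ^ t * a \<in> P (s - 1)" unfolding pi_mem by blast
qed

lemma wsum: assumes "t < s" "j \<le> s"
  shows "(\<Sum>a\<in>P j. w (g ^ t * a)) =
    (q - 1) * q ^ (s - 2) * (q ^ (s - j) - q ^ (s - max j (s - 1 - t))) +
    q ^ (s - 1) * (q ^ (s - max j (s - 1 - t)) - q ^ (s - max j (s - t)))"
proof -
  have "(\<Sum>a\<in>P j. w (g ^ t * a)) = (\<Sum>a\<in>P j. if a \<in> P (max j (s - t)) then 0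
      else if a \<in> P (max j (s - 1 - t)) then q ^ (s - 1) else (q - 1) * q ^ (s - 2))"
  proof (rule sum.cong[OF refl])
    fix a assume a: "a \<in> P j"
    show "w (g ^ t * a) = (if a \<in> P (max j (s - t)) then 0
      else if a \<in> P (max j (s - 1 - t)) then q ^ (s - 1) else (q - 1) * q ^ (s - 2))"
      unfolding hom_weight_def P_inter[OF a] gt_zero_iff[OF assms(1), symmetric]
        gt_top_iff[OF assms(1), symmetric] by simp
  qed
  also have "\<dots> = (q - 1) * q ^ (s - 2) * (card (P j) - card (P (max j (s - 1 - t)))) +
    q ^ (s - 1) * (card (P (max j (s - 1 - t))) - card (P (max j (s - t))))"
    by (rule three_sum) (auto intro!: P_mono)
  also have "\<dots> = (q - 1) * q ^ (s - 2) * (q ^ (s - j) - q ^ (s - max j (s - 1 - t))) +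
    q ^ (s - 1) * (q ^ (s - max j (s - 1 - t)) - q ^ (s - max j (s - t)))"
    using assms by (simp add: card_P)
  finally show ?thesis .
qed


lemma rho_zero: "rho T g m 0 = 0" unfolding rho_def by (simp add: T0)

lemma alpha_all: "length v = Suc m \<Longrightarrow> v \<in> set (alpha_cols T g s (Suc m))"
proof (induction m arbitrary: v)
  case 0
  then obtain r where v: "v = [r]" by (cases v) auto
  have "r \<in> rho T g s ` {..<q ^ s}" using bij_betw_imp_surj_on[OF bij_rho] by simp
  then obtain j where "j < q ^ s" "r = rho T g s j" by auto
  then show ?case unfolding v by auto
next
  case (Suc m)
  obtain r v' where v: "v = r # v'" "length v' = Suc m" using Suc.prems by (cases v) auto
  have "r \<in> rho T g s ` {..<q ^ s}" using bij_betw_imp_surj_on[OF bij_rho] by simp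
  then obtain j where j: "j < q ^ s" "r = rho T g s j" by auto
  have "v' \<in> set (alpha_cols T g s (Suc m))" using Suc.IH v(2) .
  then show ?case unfolding v using j by auto
qed

lemma e_col: "i < Suc m \<Longrightarrow> \<exists>col \<in> set (beta_cols T g s (Suc m)). length col = Suc m \<and>
   (\<forall>j < Suc m. col ! j = (if j = i then 1 else 0))"
proof (induction m arbitrary: i)
  case 0 then show ?case by simp
next
  case (Suc m)
  show ?case
  proof (cases i)
    case 0
    have "replicate (Suc m) 0 \<in> set (alpha_cols T g s (Suc m))" by (rule alpha_all) simp
    then have "1 # replicate (Suc m) 0 \<in> set (beta_cols T g s (Suc (Suc m)))" by simp
    moreover have "\<forall>j < Suc (Suc m). (1 # replicate (Suc m) 0) ! j = (if j = i then 1 else 0)"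
      using 0 by (auto simp: nth_Cons')
    ultimately show ?thesis by (intro bexI[of _ "1 # replicate (Suc m) 0"]) auto
  next
    case (Suc i')
    then obtain col where col: "col \<in> set (beta_cols T g s (Suc m))" "length col = Suc m"
      "\<forall>j < Suc m. col ! j = (if j = i' then 1 else 0)" using Suc.IH Suc.prems by auto
    have g0: "gel T g s 0 = 0" unfolding gel_eq rho_zero by simp
    have "q ^ (s - 1) > 0" using q_pos by simp
    then have "gel T g s 0 # col \<in> set (beta_cols T g s (Suc (Suc m)))" using col(1) by auto
    then have "0 # col \<in> set (beta_cols T g s (Suc (Suc m)))" unfolding g0 .
    moreover have "\<forall>j < Suc (Suc m). (0 # col) ! j = (if j = i then 1 else 0)"
      using col(3) Suc by (auto simp: nth_Cons')
    ultimately show ?thesis using col(2) by (intro bexI[of _ "0 # col"]) auto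
  qed
qed

lemma w_unit: assumes "u dvd 1" shows "w (u * z) = w z"
proof -
  obtain u' where u': "u * u' = 1" "u' dvd 1" using unit_inv[OF assms] by blast
  have z: "z = u' * (u * z)" using u' by (simp add: mult.assoc[symmetric] mult.commute[of u' u])
  have "u * z = 0 \<longleftrightarrow> z = 0" using unit_cancel0[OF assms, of z] by (auto simp: mult.commute)
  moreover have "u * z \<in> P (s - 1) \<longleftrightarrow> z \<in> P (s - 1)"
    using ideal_mult[OF pi_ideal, of "u * z" "g ^ (s - 1)" u'] ideal_mult[OF pi_ideal, of z "g ^ (s - 1)" u]
      z by auto
  ultimately show ?thesis unfolding hom_weight_def by simp
qed

lemma dot_scale: "length v = k \<Longrightarrow> dot k x (map ((*) u) v) = u * dot k x v"
  unfolding dot_def by (simp add: sum_distrib_left mult.left_commute)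

lemma val_ge: "val g (g ^ t * y) \<ge> enat t"
proof (cases "g ^ t * y = 0")
  case True then show ?thesis unfolding val_def by simp
next
  case False
  then have "y \<noteq> 0" by auto
  then obtain m u where mu: "m < s" "u dvd 1" "y = g ^ m * u" using decomp by blast
  have e: "g ^ t * y = g ^ (t + m) * u" using mu by (simp add: power_add mult.assoc)
  have "t + m < s"
  proof (rule ccontr)
    assume "\<not> t + m < s"
    then have "g ^ (t + m) = g ^ s * g ^ (t + m - s)" by (simp flip: power_add)
    then show False using False e gs0 by simp
  qed
  then show ?thesis using val_eq[OF mu(2)] e by simp
qed

lemma normalize:
  assumes "i1 < k" "x i1 \<noteq> 0"
  obtains t i0 x' where "t < s" "i0 < k" "x' i0 dvd 1" "\<forall>i<k. x i = g ^ t * x' i"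
proof -
  define S where "S = {m. \<exists>i<k. x i \<notin> P (Suc m)}"
  obtain s1 where s1: "s = Suc s1" using s_pos by (cases s) auto
  have "x i1 \<notin> P (Suc s1)" using assms(2) Ps s1 by simp
  then have "s1 \<in> S" unfolding S_def using assms(1) by blast
  define t where "t = (LEAST m. m \<in> S)"
  have tS: "t \<in> S" unfolding t_def using LeastI[of "\<lambda>m. m \<in> S" s1] \<open>s1 \<in> S\<close> by blast
  have ts: "t \<le> s1" unfolding t_def using Least_le[of "\<lambda>m. m \<in> S" s1] \<open>s1 \<in> S\<close> by blast
  obtain i0 where i0: "i0 < k" "x i0 \<notin> P (Suc t)" using tS unfolding S_def by blast
  have allin: "x i \<in> P t" if "i < k" for i
  proof (cases t)
    case 0 then show ?thesis by simp
  next
    case (Suc t')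
    show ?thesis
    proof (rule ccontr)
      assume "x i \<notin> P t"
      then have "t' \<in> S" unfolding S_def using that Suc by blast
      then have "t \<le> t'" unfolding t_def using Least_le[of "\<lambda>m. m \<in> S" t'] by blast
      then show False using Suc by simp
    qed
  qed
  have "\<forall>i. \<exists>y. i < k \<longrightarrow> x i = g ^ t * y" using allin unfolding pi_mem by blast
  then obtain f where f: "\<forall>i. i < k \<longrightarrow> x i = g ^ t * f i" by metis
  have fi0: "f i0 \<notin> principal_ideal g"
  proof
    assume "f i0 \<in> principal_ideal g"
    then obtain z where "f i0 = g * z" unfolding pi_mem by blast
    then have "x i0 = g ^ Suc t * z" using f i0(1) by (simp add: mult.assoc)
    then show False using i0(2) unfolding pi_mem by blast
  qed
  show ?thesis
  proof (rule that)
    show "t < s" using ts s1 by simp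
    show "i0 < k" by (rule i0(1))
    show "f i0 dvd 1" using fi0 by (rule notin_unit)
    show "\<forall>i<k. x i = g ^ t * f i" using f by blast
  qed
qed


lemma card_U: "card U = q ^ s - q ^ (s - 1)"
proof -
  have "U = UNIV - principal_ideal g" unfolding U_eq by auto
  moreover have "card (UNIV - principal_ideal g) = card (UNIV :: 'a set) - card (principal_ideal g)"
    by (rule card_Diff_subset) simp_all
  ultimately have "card U = card (UNIV :: 'a set) - card (principal_ideal g)" by simp
  also have "card (principal_ideal g) = q ^ (s - 1)" using card_P[of 1] s_pos by simp
  finally show ?thesis using card_UNIV by simp
qed

lemma main_nz:
  assumes t: "t < s" and i0: "i0 < Suc m" and u: "x' i0 dvd 1"
  shows "(t = s - 1 \<longrightarrow> sum_list (map (\<lambda>col. w (g ^ t * dot (Suc m) x' col)) (beta_cols T g s (Suc m)))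
            = q ^ (s * Suc m - 1)) \<and>
         (t < s - 1 \<longrightarrow> sum_list (map (\<lambda>col. w (g ^ t * dot (Suc m) x' col)) (beta_cols T g s (Suc m)))
            = q ^ (s * Suc m - Suc m - 1) * (q ^ Suc m - 1))"
proof -
  define k where "k = Suc m"
  define F where "F col = w (g ^ t * dot k x' col)" for col
  define h where "h a = w (g ^ t * a)" for a
  define W where "W = sum_list (map F (beta_cols T g s k))"
  define SL where "SL = (\<Sum>v\<in>LI UNIV k. F v)"
  define SM where "SM = (\<Sum>v\<in>LI (principal_ideal g) k. F v)"
  define S0 where "S0 = (\<Sum>a\<in>UNIV. h a)"
  define S1 where "S1 = (\<Sum>a\<in>principal_ideal g. h a)"
  have Finv: "F (map ((*) v) c) = F c" if "v dvd 1" "length c = Suc m" for v c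
  proof -
    have "F (map ((*) v) c) = w (v * (g ^ t * dot k x' c))"
      unfolding F_def k_def dot_scale[OF that(2)] by (simp add: mult.left_commute)
    also have "\<dots> = F c" unfolding F_def by (rule w_unit[OF that(1)])
    finally show ?thesis .
  qed
  have A0: "card U * W = (\<Sum>v\<in>N k. F v)"
    unfolding W_def k_def by (rule beta_avg) (rule Finv)
  have sub: "LI (principal_ideal g) k \<subseteq> LI UNIV k" unfolding LI_def by auto
  have Neq: "N k = LI UNIV k - LI (principal_ideal g) k"
    unfolding N_def LI_def nz_def by auto
  have "SL = (\<Sum>v\<in>N k. F v) + SM"
    unfolding SL_def SM_def Neq by (rule sum.subset_diff[OF sub LI_finite])
  then have A: "(q ^ s - q ^ (s - 1)) * W + SM = SL" using A0 card_U by simp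
  obtain e where e: "x' i0 * e = 1" "e dvd 1" using unit_inv[OF u] by blast
  have i0k: "i0 < k" using i0 k_def by simp
  have idU: "is_ideal (UNIV :: 'a set)" using pi_ideal[of 1] by simp
  have "card (UNIV :: 'a set) * (\<Sum>v\<in>LI UNIV k. h (dot k x' v)) = card (LI UNIV k) * (\<Sum>a\<in>UNIV. h a)"
    by (rule trans_sum[where x = x' and i = i0 and e = e, OF idU i0k e(1)])
  then have B: "q ^ s * SL = (q ^ s) ^ k * S0"
    unfolding SL_def S0_def F_def h_def LI_card card_UNIV .
  have "card (principal_ideal g) * (\<Sum>v\<in>LI (principal_ideal g) k. h (dot k x' v)) =
      card (LI (principal_ideal g) k) * (\<Sum>a\<in>principal_ideal g. h a)"
    by (rule trans_sum[where x = x' and i = i0 and e = e, OF pi_ideal i0k e(1)])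
  moreover have "card (principal_ideal g) = q ^ (s - 1)" using card_P[of 1] s_pos by simp
  ultimately have C: "q ^ (s - 1) * SM = (q ^ (s - 1)) ^ k * S1"
    unfolding SM_def S1_def F_def h_def LI_card by simp
  have "(\<Sum>a\<in>P 0. w (g ^ t * a)) =
    (q - 1) * q ^ (s - 2) * (q ^ (s - 0) - q ^ (s - max 0 (s - 1 - t))) +
    q ^ (s - 1) * (q ^ (s - max 0 (s - 1 - t)) - q ^ (s - max 0 (s - t)))"
    by (rule wsum) (use t in simp_all)
  then have S0: "S0 = (q - 1) * q ^ (s - 2) * (q ^ (s - 0) - q ^ (s - max 0 (s - 1 - t))) +
    q ^ (s - 1) * (q ^ (s - max 0 (s - 1 - t)) - q ^ (s - max 0 (s - t)))"
    unfolding S0_def h_def by (simp only: P0)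
  have "(\<Sum>a\<in>P 1. w (g ^ t * a)) =
    (q - 1) * q ^ (s - 2) * (q ^ (s - 1) - q ^ (s - max 1 (s - 1 - t))) +
    q ^ (s - 1) * (q ^ (s - max 1 (s - 1 - t)) - q ^ (s - max 1 (s - t)))"
    by (rule wsum) (use t s_pos in simp_all)
  then have S1: "S1 = (q - 1) * q ^ (s - 2) * (q ^ (s - 1) - q ^ (s - max 1 (s - 1 - t))) +
    q ^ (s - 1) * (q ^ (s - max 1 (s - 1 - t)) - q ^ (s - max 1 (s - t)))"
    unfolding S1_def h_def by (simp only: power_one_right)
  have Wd: "sum_list (map (\<lambda>col. w (g ^ t * dot (Suc m) x' col)) (beta_cols T g s (Suc m))) = W"
    unfolding W_def F_def k_def ..
  have k1: "k \<ge> 1" unfolding k_def by simp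
  show ?thesis unfolding Wd
  proof (intro conjI impI)
    assume "t = s - 1"
    from arith_top[OF q_ge2 s_pos k1 this A B C S0 S1] show "W = q ^ (s * Suc m - 1)"
      unfolding k_def .
  next
    assume "t < s - 1"
    from arith_low[OF q_ge2 k1 this A B C S0 S1] show "W = q ^ (s * Suc m - Suc m - 1) * (q ^ Suc m - 1)"
      unfolding k_def .
  qed
qed


end

theorem proposition3p24:
  fixes g :: "'a::{comm_ring_1, finite}" and s :: nat and T :: "'a list"
    and k :: nat and c :: "'a list"
  assumes "chain_ring TYPE('a)"
    and "is_maximal_ideal (principal_ideal g)"
    and "nilpotency_index g s"
    and "coset_reps T g"
    and "k \<ge> 1"
    and "c \<in> S_beta T g s k"
  shows "(val_vec g c = enat (s - 1) \<longrightarrow>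
            hom_weight_vec (length T) g s c = length T ^ (s * k - 1))
       \<and> (val_vec g c < enat (s - 1) \<longrightarrow>
            hom_weight_vec (length T) g s c = length T ^ (s * k - k - 1) * (length T ^ k - 1))
       \<and> (val_vec g c > enat (s - 1) \<longrightarrow> hom_weight_vec (length T) g s c = 0)"
proof -
  interpret cr g s T using assms(1-4) by unfold_locales
  obtain m where k: "k = Suc m" using assms(5) by (cases k) auto
  obtain x where cx: "c = map (\<lambda>col. \<Sum>i<k. x i * col ! i) (beta_cols T g s k)"
    using assms(6) unfolding S_beta_def by blast
  have c': "c = map (dot k x) (beta_cols T g s k)" unfolding cx dot_def ..
  have hw: "hom_weight_vec q g s c = sum_list (map (\<lambda>col. w (dot k x col)) (beta_cols T g s k))"
    unfolding hom_weight_vec_def c' by (simp add: comp_def)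
  obtain col0 where col0: "col0 \<in> set (beta_cols T g s k)"
    using e_col[of 0 m] k by auto
  show ?thesis
  proof (cases "\<exists>i<k. x i \<noteq> 0")
    case False
    then have d0: "dot k x col = 0" for col unfolding dot_def by simp
    have "hom_weight_vec q g s c = 0" unfolding hw d0 by (simp add: hom_weight_def)
    moreover have "set (map (val g) c) = {\<infinity>}"
      using col0 unfolding c' d0 by (auto simp: val_def)
    then have "val_vec g c = \<infinity>" unfolding val_vec_def by simp
    ultimately show ?thesis by simp
  next
    case True
    then obtain i1 where "i1 < k" "x i1 \<noteq> 0" by blast
    then obtain t i0 x' where t: "t < s" and i0: "i0 < k" and u: "x' i0 dvd 1"
      and xx: "\<forall>i<k. x i = g ^ t * x' i" by (rule normalize)
    have dx: "dot k x col = g ^ t * dot k x' col" for col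
      unfolding dot_def sum_distrib_left using xx by (simp add: mult.assoc)
    have vv: "val_vec g c = enat t"
    proof -
      have fin: "finite (set (map (val g) c))" by simp
      have ge: "\<forall>y\<in>set (map (val g) c). enat t \<le> y"
        unfolding c' using val_ge by (auto simp: dx)
      obtain col where col: "col \<in> set (beta_cols T g s k)" "length col = k"
        "\<forall>j<k. col ! j = (if j = i0 then 1 else 0)"
        using e_col[of i0 m] i0 k by auto
      have "dot k x' col = (\<Sum>j<k. if j = i0 then x' j else 0)"
        unfolding dot_def by (rule sum.cong[OF refl]) (use col(3) in simp)
      also have "\<dots> = x' i0" using i0 by simp
      finally have "val g (dot k x col) = enat t" unfolding dx using val_eq[OF u t] by simp
      then have mem: "enat t \<in> set (map (val g) c)" unfolding c' using col(1) by force
      show ?thesis unfolding val_vec_def by (rule Min_eqI[OF fin]) (use ge mem in auto)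
    qed
    have W: "hom_weight_vec q g s c =
        sum_list (map (\<lambda>col. w (g ^ t * dot (Suc m) x' col)) (beta_cols T g s (Suc m)))"
      unfolding hw dx unfolding k ..
    note mn = main_nz[of t i0 m x', OF t i0[unfolded k] u]
    show ?thesis unfolding vv W k using mn t by auto
  qed
qed

end
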